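(* Let $T$ be a generalized tree-like graph with parameters $n_o\ge1$, $k_c$, $\hat k_b\ge1$, orchestrator vertices $o_1,\dots,o_{n_o}$ and bridge sets $B_i=N_{o_i}\cap N_{o_{i+1}}$. Let $1\le a\le b\le n_o$ and let $c\ne c'$ be clients with $c\in N_{o_a}$, $c'\in N_{o_b}$, and, if $a<b$, $c\notin N_{o_{a+1}}$ and $c'\notin N_{o_{b-1}}$; then the proximity is $d(c,c')=b-a+1$. For each $m\in\{a,\dots,b-1\}$ choose a bridge $\beta_m\in B_m$. Starting from $T$, apply successively, for $m=a,a+1,\dots,b-1$, the $\sigma_x$-measurement rule at $o_m$ with support vertex $b_0=\beta_m$ (replace $H$ by $\tau_{\beta_m}(\tau_{o_m}(\tau_{\beta_m}(H))-o_m)$), and finally the $\sigma_x$-measurement rule at $o_b$ with support vertex $b_0=c'$. Then all these $d(c,c')$ operations are well defined (each support vertex is a neighbour of the measured vertex in the current graph) and in the resulting graph $c$ and $c'$ are adjacent. Equivalently, $d(c,c')$ single-qubit $\sigma_x$-measurements on orchestrator qubits along a shortest $c$–$c'$ path create, up to local unitaries, an edge (artificial link) between $c$ and $c'$.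
   Context: All graphs are finite, simple and undirected. For $H=(V,E)$ and $a\in V$, $N_a=\{b:\{a,b\}\in E\}$; $\tau_a(H)$ toggles the edge $\{b,c\}$ for every pair of distinct $b,c\in N_a$ and leaves other edges unchanged; $H-a$ deletes $a$ and its incident edges. Graph state $\ket{H}=\prod_{\{a,b\}\in E}\mathrm{CZ}_{ab}\ket{+}^{\otimes|V|}$; measuring the qubit at $a$ in $\sigma_x$ with chosen $b_0\in N_a$ yields, up to local unitaries, the graph state of $\tau_{b_0}(\tau_a(\tau_{b_0}(H))-a)$. Generalized tree-like graph with parameters $n_o\ge1$, $k_c$, $\hat k_b\ge1$: vertex set $\{o_1,\dots,o_{n_o}\}\cup V_c$ (disjoint) such that (i) every edge joins some $o_i$ to a client; (ii) $|N_{o_i}|=k_c$ for all $i$; (iii) $|N_{o_i}\cap N_{o_{i+1}}|=\hat k_b$ for $1\le i<n_o$; (iv) $N_{o_i}\cap N_{o_j}=\emptyset$ for $|i-j|\ge2$; (v) every client is adjacent to some $o_i$. A client adjacent to more than one orchestrator vertex is a bridge. The proximity $d(c,c')$ of distinct clients is $1$ plus the number of bridges lying strictly between $c$ and $c'$ on a shortest $c$–$c'$ path. *)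

theory Defs
  imports Main
begin

text \<open>The graph operations below only act on the edge set
  (deleting a vertex removes its incident edges).\<close>

definition simple_graph :: "'a set \<Rightarrow> 'a set set \<Rightarrow> bool" where
  "simple_graph V E \<longleftrightarrow> finite V \<and> (\<forall>e\<in>E. \<exists>x y. x \<in> V \<and> y \<in> V \<and> x \<noteq> y \<and> e = {x, y})"

definition nbhd :: "'a set set \<Rightarrow> 'a \<Rightarrow> 'a set" where
  "nbhd E a = {b. {a, b} \<in> E}"

definition loc_comp :: "'a set set \<Rightarrow> 'a \<Rightarrow> 'a set set" where
  "loc_comp E a =
     (let X = {{b, c} | b c. b \<in> nbhd E a \<and> c \<in> nbhd E a \<and> b \<noteq> c}
      in (E - X) \<union> (X - E))"

definition del_vertex :: "'a set set \<Rightarrow> 'a \<Rightarrow> 'a set set" where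
  "del_vertex E a = {e \<in> E. a \<notin> e}"

definition meas_x :: "'a set set \<Rightarrow> 'a \<Rightarrow> 'a \<Rightarrow> 'a set set" where
  "meas_x E a b0 = loc_comp (del_vertex (loc_comp (loc_comp E b0) a) a) b0"

definition tree_like ::
  "'a set \<Rightarrow> 'a set set \<Rightarrow> nat \<Rightarrow> nat \<Rightarrow> nat \<Rightarrow> (nat \<Rightarrow> 'a) \<Rightarrow> 'a set \<Rightarrow> bool" where
  "tree_like V E n_o k_c kb orc Vc \<longleftrightarrow>
     simple_graph V E \<and> n_o \<ge> 1 \<and> kb \<ge> 1 \<and>
     inj_on orc {1..n_o} \<and> orc ` {1..n_o} \<inter> Vc = {} \<and> V = orc ` {1..n_o} \<union> Vc \<and>
     (\<forall>e\<in>E. \<exists>i\<in>{1..n_o}. \<exists>c\<in>Vc. e = {orc i, c}) \<and>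
     (\<forall>i\<in>{1..n_o}. card (nbhd E (orc i)) = k_c) \<and>
     (\<forall>i. 1 \<le> i \<and> i < n_o \<longrightarrow> card (nbhd E (orc i) \<inter> nbhd E (orc (i + 1))) = kb) \<and>
     (\<forall>i\<in>{1..n_o}. \<forall>j\<in>{1..n_o}. (i + 2 \<le> j \<or> j + 2 \<le> i) \<longrightarrow>
         nbhd E (orc i) \<inter> nbhd E (orc j) = {}) \<and>
     (\<forall>c\<in>Vc. \<exists>i\<in>{1..n_o}. c \<in> nbhd E (orc i))"

definition is_bridge :: "'a set set \<Rightarrow> nat \<Rightarrow> (nat \<Rightarrow> 'a) \<Rightarrow> 'a set \<Rightarrow> 'a \<Rightarrow> bool" where
  "is_bridge E n_o orc Vc v \<longleftrightarrow> v \<in> Vc \<and> card {i \<in> {1..n_o}. v \<in> nbhd E (orc i)} \<ge> 2"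

definition is_path :: "'a set set \<Rightarrow> 'a \<Rightarrow> 'a \<Rightarrow> 'a list \<Rightarrow> bool" where
  "is_path E x y p \<longleftrightarrow> p \<noteq> [] \<and> hd p = x \<and> last p = y \<and> distinct p \<and>
     (\<forall>i. i + 1 < length p \<longrightarrow> {p ! i, p ! (i + 1)} \<in> E)"

definition is_shortest_path :: "'a set set \<Rightarrow> 'a \<Rightarrow> 'a \<Rightarrow> 'a list \<Rightarrow> bool" where
  "is_shortest_path E x y p \<longleftrightarrow> is_path E x y p \<and>
     (\<forall>q. is_path E x y q \<longrightarrow> length p \<le> length q)"

definition path_proximity :: "'a set set \<Rightarrow> nat \<Rightarrow> (nat \<Rightarrow> 'a) \<Rightarrow> 'a set \<Rightarrow> 'a list \<Rightarrow> nat" where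
  "path_proximity E n_o orc Vc p =
     1 + card {i. 0 < i \<and> i + 1 < length p \<and> is_bridge E n_o orc Vc (p ! i)}"

definition proximity_is ::
  "'a set set \<Rightarrow> nat \<Rightarrow> (nat \<Rightarrow> 'a) \<Rightarrow> 'a set \<Rightarrow> 'a \<Rightarrow> 'a \<Rightarrow> nat \<Rightarrow> bool" where
  "proximity_is E n_o orc Vc x y d \<longleftrightarrow>
     (\<exists>p. is_shortest_path E x y p) \<and>
     (\<forall>p. is_shortest_path E x y p \<longrightarrow> path_proximity E n_o orc Vc p = d)"

fun meas_seq :: "'a set set \<Rightarrow> (nat \<Rightarrow> 'a) \<Rightarrow> (nat \<Rightarrow> 'a) \<Rightarrow> nat \<Rightarrow> nat \<Rightarrow> 'a set set" where
  "meas_seq E orc beta a 0 = E"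
| "meas_seq E orc beta a (Suc k) = meas_x (meas_seq E orc beta a k) (orc (a + k)) (beta (a + k))"

end

theory Submission
  imports Defs
begin


definition adj :: "'a set set \<Rightarrow> 'a \<Rightarrow> 'a \<Rightarrow> bool" where "adj E x y \<longleftrightarrow> {x,y} \<in> E"

lemma adj_sym: "adj E x y = adj E y x" by (simp add: adj_def insert_commute)

lemma lc_adj: "adj (loc_comp E z) x y \<longleftrightarrow> (adj E x y \<noteq> (x \<noteq> y \<and> adj E z x \<and> adj E z y))"
proof -
  have "{x,y} \<in> {{b, c} | b c. b \<in> nbhd E z \<and> c \<in> nbhd E z \<and> b \<noteq> c} \<longleftrightarrow> (x \<noteq> y \<and> {z,x} \<in> E \<and> {z,y} \<in> E)"
    by (auto simp: nbhd_def doubleton_eq_iff)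
  then show ?thesis unfolding loc_comp_def Let_def adj_def by blast
qed

lemma del_adj: "adj (del_vertex E a) x y \<longleftrightarrow> adj E x y \<and> x \<noteq> a \<and> y \<noteq> a"
  by (auto simp add: del_vertex_def adj_def)

lemma meas_adj: "adj (meas_x E a b0) x y = 
  (let A1 = (\<lambda>x y. adj E x y \<noteq> (x \<noteq> y \<and> adj E b0 x \<and> adj E b0 y));
       A2 = (\<lambda>x y. A1 x y \<noteq> (x \<noteq> y \<and> A1 a x \<and> A1 a y));
       A3 = (\<lambda>x y. A2 x y \<and> x \<noteq> a \<and> y \<noteq> a)
   in A3 x y \<noteq> (x \<noteq> y \<and> A3 b0 x \<and> A3 b0 y))"
  unfolding meas_x_def Let_def by (simp add: lc_adj del_adj)




lemma meas_local: "u \<noteq> a \<Longrightarrow> v \<noteq> a \<Longrightarrow> \<not> adj E a u \<Longrightarrow> \<not> adj E b0 u \<Longrightarrow>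
   adj (meas_x E a b0) u v \<longleftrightarrow> adj E u v"
  using adj_sym[of E u b0] adj_sym[of E u a]
  by (simp add: meas_adj Let_def) 

lemma meas_step: "c \<noteq> o' \<Longrightarrow> c \<noteq> om \<Longrightarrow> o' \<noteq> om \<Longrightarrow> be \<noteq> om \<Longrightarrow> c \<noteq> be \<Longrightarrow> o' \<noteq> be \<Longrightarrow>
  adj G om c \<Longrightarrow> \<not> adj G om o' \<Longrightarrow> adj G be o' \<Longrightarrow> \<not> adj G be c \<Longrightarrow> \<not> adj G c o' \<Longrightarrow> adj G be om
  \<Longrightarrow> adj (meas_x G om be) o' c"
  using adj_sym[of G om be] adj_sym[of G o' c]
  by (simp add: meas_adj Let_def) 

lemma meas_final: "c \<noteq> c' \<Longrightarrow> c \<noteq> a \<Longrightarrow> c' \<noteq> a \<Longrightarrow> adj G a c \<Longrightarrow> adj G a c' \<Longrightarrow> \<not> adj G c' c'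
  \<Longrightarrow> adj (meas_x G a c') c c'"
  using adj_sym[of G a c'] adj_sym[of G c c']
  by (simp add: meas_adj Let_def) 

lemma meas_noloop: "(\<forall>x. \<not> adj E x x) \<Longrightarrow> \<not> adj (meas_x E a b0) x x"
  by (simp add: meas_adj Let_def)

lemma meas_iso_a: "\<not> adj (meas_x E a b0) a y"
  using adj_sym[of E a b0] by (simp add: meas_adj Let_def)

lemma meas_iso: "(\<forall>y. \<not> adj E z y) \<Longrightarrow> \<not> adj (meas_x E a b0) z y"
  using adj_sym[of E z b0] adj_sym[of E z a] by (simp add: meas_adj Let_def)




locale tl =
  fixes V :: "'a set" and E :: "'a set set" and n_o k_c kb :: nat and orc :: "nat \<Rightarrow> 'a" and Vc :: "'a set"
  assumes T: "tree_like V E n_o k_c kb orc Vc"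
begin

lemma simple: "simple_graph V E" using T[unfolded tree_like_def] by (elim conjE)
lemma inj0: "inj_on orc {1..n_o}" using T[unfolded tree_like_def] by (elim conjE)
lemma dis0: "orc ` {1..n_o} \<inter> Vc = {}" using T[unfolded tree_like_def] by (elim conjE)
lemma edges: "\<forall>e\<in>E. \<exists>i\<in>{1..n_o}. \<exists>v\<in>Vc. e = {orc i, v}" using T[unfolded tree_like_def] by (elim conjE)
lemma dj0: "\<forall>i\<in>{1..n_o}. \<forall>j\<in>{1..n_o}. (i + 2 \<le> j \<or> j + 2 \<le> i) \<longrightarrow>
         nbhd E (orc i) \<inter> nbhd E (orc j) = {}" using T[unfolded tree_like_def] by (elim conjE)
lemma orc_inj: "i \<in> {1..n_o} \<Longrightarrow> j \<in> {1..n_o} \<Longrightarrow> orc i = orc j \<Longrightarrow> i = j"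
  using inj0 unfolding inj_on_def by blast
lemma orc_Vc: "i \<in> {1..n_o} \<Longrightarrow> orc i \<notin> Vc" using dis0 by blast
lemma disj0: "i \<in> {1..n_o} \<Longrightarrow> j \<in> {1..n_o} \<Longrightarrow> i + 2 \<le> j \<Longrightarrow> nbhd E (orc i) \<inter> nbhd E (orc j) = {}"
  using dj0 by blast

lemma noloop: "\<not> adj E x x"
proof
  assume "adj E x x"
  then have "{x} \<in> E" by (simp add: adj_def)
  with simple obtain p q where "p \<noteq> q" "{x} = {p,q}" unfolding simple_graph_def by blast
  then have "p \<in> {x}" "q \<in> {x}" by auto
  then show False using \<open>p \<noteq> q\<close> by simp
qed

lemma edge_adj: "adj E x y \<Longrightarrow> \<exists>i\<in>{1..n_o}. \<exists>v\<in>Vc. (x = orc i \<and> y = v) \<or> (x = v \<and> y = orc i)"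
proof -
  assume "adj E x y"
  then obtain i v where "i \<in> {1..n_o}" "v \<in> Vc" "{x,y} = {orc i, v}" using edges unfolding adj_def by (metis)
  then have "(x = orc i \<and> y = v) \<or> (x = v \<and> y = orc i)" by (simp add: doubleton_eq_iff)
  then show ?thesis using \<open>i \<in> {1..n_o}\<close> \<open>v \<in> Vc\<close> by blast
qed

lemma nb_Vc: "i \<in> {1..n_o} \<Longrightarrow> adj E (orc i) y \<Longrightarrow> y \<in> Vc"
  using edge_adj orc_Vc by blast

lemma cc_nadj: "x \<in> Vc \<Longrightarrow> y \<in> Vc \<Longrightarrow> \<not> adj E x y"
  using edge_adj orc_Vc by blast

lemma oo_nadj: "i \<in> {1..n_o} \<Longrightarrow> j \<in> {1..n_o} \<Longrightarrow> \<not> adj E (orc i) (orc j)"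
  using edge_adj orc_Vc by metis

lemma disjN: "i \<in> {1..n_o} \<Longrightarrow> j \<in> {1..n_o} \<Longrightarrow> i + 2 \<le> j \<Longrightarrow> adj E (orc i) x \<Longrightarrow> adj E (orc j) x \<Longrightarrow> False"
  using disj0[of i j] unfolding nbhd_def adj_def by blast

end

locale su = tl +
  fixes a b :: nat and c c' :: 'a and beta :: "nat \<Rightarrow> 'a"
  assumes ab: "1 \<le> a" "a \<le> b" "b \<le> n_o" and cc: "c \<in> Vc" "c' \<in> Vc" "c \<noteq> c'"
  and ca: "adj E (orc a) c" and cb: "adj E (orc b) c'"
  and ends: "a < b \<Longrightarrow> \<not> adj E (orc (a+1)) c \<and> \<not> adj E (orc (b-1)) c'"
  and beta: "\<And>m. a \<le> m \<Longrightarrow> m < b \<Longrightarrow> adj E (orc m) (beta m) \<and> adj E (orc (m+1)) (beta m)"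
begin

lemma beta_Vc: "a \<le> m \<Longrightarrow> m < b \<Longrightarrow> beta m \<in> Vc"
  using beta[of m] nb_Vc[of m] ab by auto

lemma c_ne_beta: "a \<le> m \<Longrightarrow> m < b \<Longrightarrow> c \<noteq> beta m"
proof
  assume m: "a \<le> m" "m < b" and e: "c = beta m"
  show False
  proof (cases "m = a")
    case True then show ?thesis using ends beta[of m] m e by auto
  next
    case False then show ?thesis using disjN[of a "m+1" c] beta[of m] m e ab ca by auto
  qed
qed

lemma c'_ne_beta: "a \<le> m \<Longrightarrow> m < b \<Longrightarrow> c' \<noteq> beta m"
proof
  assume m: "a \<le> m" "m < b" and e: "c' = beta m"
  show False
  proof (cases "m = b - 1")
    case True then show ?thesis using ends beta[of m] m e by auto
  next
    case False then have "m + 2 \<le> b" using m by arith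
    then show ?thesis using disjN[of m b c'] beta[of m] m e ab cb by auto
  qed
qed

lemma beta_inj: "a \<le> m \<Longrightarrow> m < b \<Longrightarrow> a \<le> m' \<Longrightarrow> m' < b \<Longrightarrow> beta m = beta m' \<Longrightarrow> m = m'"
proof (rule ccontr)
  assume h: "a \<le> m" "m < b" "a \<le> m'" "m' < b" "beta m = beta m'" "m \<noteq> m'"
  show False
  proof (cases "m < m'")
    case True then show ?thesis using disjN[of m "m'+1" "beta m"] beta[of m] beta[of m'] h ab by auto
  next
    case False then show ?thesis using disjN[of m' "m+1" "beta m"] beta[of m] beta[of m'] h ab by auto
  qed
qed

lemma c_only: "j \<in> {1..n_o} \<Longrightarrow> adj E (orc j) c \<Longrightarrow> a < b \<Longrightarrow> j \<le> a"
proof (rule ccontr)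
  assume h: "j \<in> {1..n_o}" "adj E (orc j) c" "a < b" "\<not> j \<le> a"
  show False
  proof (cases "j = a + 1")
    case True then show ?thesis using ends h by auto
  next
    case False then show ?thesis using disjN[of a j c] h ab ca by auto
  qed
qed

lemma c'_only: "j \<in> {1..n_o} \<Longrightarrow> adj E (orc j) c' \<Longrightarrow> a < b \<Longrightarrow> b \<le> j"
proof (rule ccontr)
  assume h: "j \<in> {1..n_o}" "adj E (orc j) c'" "a < b" "\<not> b \<le> j"
  show False
  proof (cases "j = b - 1")
    case True then show ?thesis using ends h by auto
  next
    case False then have "j + 2 \<le> b" using h by arith
    then show ?thesis using disjN[of j b c'] h ab cb by auto
  qed
qed

end



context su begin

definition Gk where "Gk k = meas_seq E orc beta a k"
definition Lk where "Lk k = {x. \<exists>j. a \<le> j \<and> j < a + k \<and> adj E (orc j) x}"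
definition Mk where "Mk k = orc ` {a..<a+k}"
definition Inv where "Inv k \<longleftrightarrow>
  (\<forall>u v. u \<noteq> v \<longrightarrow> u \<notin> Lk k \<longrightarrow> v \<notin> Lk k \<longrightarrow> u \<notin> Mk k \<longrightarrow> v \<notin> Mk k \<longrightarrow> adj (Gk k) u v = adj E u v)
  \<and> (\<forall>z\<in>Mk k. \<forall>y. \<not> adj (Gk k) z y)
  \<and> (\<forall>x\<in>Lk k. \<forall>y. y \<notin> Lk k \<longrightarrow> (y \<in> Vc \<or> (\<exists>j. a + k < j \<and> j \<le> n_o \<and> y = orc j)) \<longrightarrow> \<not> adj (Gk k) x y)
  \<and> adj (Gk k) (orc (a+k)) c
  \<and> (\<forall>x. \<not> adj (Gk k) x x)"

lemma Lk_Vc: "k \<le> b - a \<Longrightarrow> x \<in> Lk k \<Longrightarrow> x \<in> Vc"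
proof -
  assume "k \<le> b - a" "x \<in> Lk k"
  then obtain j where "a \<le> j" "j < a + k" "adj E (orc j) x" unfolding Lk_def by auto
  moreover have "j \<in> {1..n_o}" using calculation \<open>k \<le> b - a\<close> ab by auto
  ultimately show ?thesis using nb_Vc by blast
qed

lemma orc_notL: "k \<le> b - a \<Longrightarrow> j \<in> {1..n_o} \<Longrightarrow> orc j \<notin> Lk k"
  using Lk_Vc orc_Vc by blast

lemma Vc_notM: "k \<le> b - a \<Longrightarrow> x \<in> Vc \<Longrightarrow> x \<notin> Mk k"
  unfolding Mk_def using orc_Vc ab by fastforce

lemma orc_M: "k \<le> b - a \<Longrightarrow> j \<in> {1..n_o} \<Longrightarrow> (orc j \<in> Mk k) = (a \<le> j \<and> j < a + k)"
proof
  assume "k \<le> b - a" "j \<in> {1..n_o}" "orc j \<in> Mk k"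
  then obtain i where "i \<in> {a..<a+k}" "orc j = orc i" unfolding Mk_def by auto
  moreover have "i \<in> {1..n_o}" using calculation \<open>k \<le> b - a\<close> ab by auto
  ultimately show "a \<le> j \<and> j < a + k" using orc_inj \<open>j \<in> {1..n_o}\<close> by auto
qed (auto simp: Mk_def)

lemma Gk_Suc: "Gk (Suc k) = meas_x (Gk k) (orc (a+k)) (beta (a+k))"
  by (simp add: Gk_def)

lemma Lk_Suc: "Lk (Suc k) = Lk k \<union> {x. adj E (orc (a+k)) x}"
  unfolding Lk_def by (auto simp: less_Suc_eq) (metis le_add1 less_add_same_cancel1 less_irrefl_nat)

lemma Mk_Suc: "Mk (Suc k) = insert (orc (a+k)) (Mk k)"
  unfolding Mk_def by (auto simp: less_Suc_eq image_iff)

lemma Inv_0: "Inv 0"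
  unfolding Inv_def Lk_def Mk_def Gk_def using ca noloop by auto

lemma Inv_Suc:
  assumes k: "k < b - a" and I: "Inv k"
  shows "Inv (Suc k) \<and> adj (Gk k) (orc (a+k)) (beta (a+k))"
proof -
  define m where "m = a + k"
  define o1 where "o1 = orc m"
  define o2 where "o2 = orc (m+1)"
  define be where "be = beta m"
  have kk: "k \<le> b - a" "Suc k \<le> b - a" using k by auto
  have mR: "m \<in> {1..n_o}" and m1R: "m+1 \<in> {1..n_o}" and am: "a \<le> m" "m < b"
    using k ab unfolding m_def by auto
  have I1: "\<And>u v. u \<noteq> v \<Longrightarrow> u \<notin> Lk k \<Longrightarrow> v \<notin> Lk k \<Longrightarrow> u \<notin> Mk k \<Longrightarrow> v \<notin> Mk k \<Longrightarrow> adj (Gk k) u v = adj E u v"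
    and I2: "\<And>z y. z \<in> Mk k \<Longrightarrow> \<not> adj (Gk k) z y"
    and I3: "\<And>x y. x \<in> Lk k \<Longrightarrow> y \<notin> Lk k \<Longrightarrow> (y \<in> Vc \<or> (\<exists>j. a + k < j \<and> j \<le> n_o \<and> y = orc j)) \<Longrightarrow> \<not> adj (Gk k) x y"
    and I4: "adj (Gk k) o1 c"
    and I5: "\<And>x. \<not> adj (Gk k) x x"
    using I unfolding Inv_def o1_def m_def by blast+
  have beta_m: "adj E o1 be" "adj E o2 be" using beta[OF am] unfolding o1_def o2_def be_def by auto
  have beVc: "be \<in> Vc" using beta_Vc[OF am] be_def by simp
  have beL: "be \<notin> Lk k"
  proof
    assume "be \<in> Lk k"
    then obtain j where j: "a \<le> j" "j < a + k" "adj E (orc j) be" unfolding Lk_def by auto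
    then show False using disjN[of j "m+1" be] beta_m m1R ab unfolding m_def o2_def by auto
  qed
  have beM: "be \<notin> Mk k" using Vc_notM[OF kk(1) beVc] .
  have o1L: "o1 \<notin> Lk k" "o2 \<notin> Lk k" using orc_notL[OF kk(1)] mR m1R unfolding o1_def o2_def by auto
  have o1M: "o1 \<notin> Mk k" "o2 \<notin> Mk k" using orc_M[OF kk(1)] mR m1R unfolding o1_def o2_def m_def by auto
  have o1M': "o1 \<in> Mk (Suc k)" unfolding Mk_Suc o1_def m_def by simp
  have neq: "o1 \<noteq> o2" "be \<noteq> o1" "be \<noteq> o2" "c \<noteq> o1" "c \<noteq> o2" "c \<noteq> be"
    using orc_inj[OF mR m1R] orc_Vc[OF mR] orc_Vc[OF m1R] beVc cc c_ne_beta[OF am]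
    unfolding o1_def o2_def be_def by auto
  have cVc: "c \<in> Vc" using cc by simp
  have ha: "adj (Gk k) o1 be" using I1[of o1 be] neq o1L beL o1M beM beta_m by auto
  have hb: "adj (Gk k) be o2" using I1[of be o2] neq o1L beL o1M beM beta_m adj_sym by metis
  have hd: "\<not> adj (Gk k) o1 o2" using I1[of o1 o2] neq o1L o1M oo_nadj[OF mR m1R] unfolding o1_def o2_def by auto
  have N5: "\<And>y. adj (Gk k) o1 y \<Longrightarrow> y \<in> Lk k \<or> adj E o1 y"
  proof -
    fix y assume h: "adj (Gk k) o1 y"
    show "y \<in> Lk k \<or> adj E o1 y"
    proof (cases "y \<in> Mk k")
      case True then show ?thesis using I2 h adj_sym by metis
    next
      case False
      show ?thesis
      proof (cases "y = o1")
        case True then show ?thesis using I5 h by auto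
      next
        case False
        then show ?thesis using I1[of o1 y] h o1L o1M \<open>y \<notin> Mk k\<close> by auto
      qed
    qed
  qed
  have Nbe: "\<And>y. adj (Gk k) be y \<Longrightarrow> y \<in> Lk k \<or> y = o1 \<or> y = o2"
  proof -
    fix y assume h: "adj (Gk k) be y"
    show "y \<in> Lk k \<or> y = o1 \<or> y = o2"
    proof (cases "y \<in> Mk k")
      case True then show ?thesis using I2 h adj_sym by metis
    next
      case yM: False
      show ?thesis
      proof (cases "y = be")
        case True then show ?thesis using I5 h by auto
      next
        case False
        show ?thesis
        proof (cases "y \<in> Lk k")
          case False
          then have "adj E be y" using I1[of be y] h beL beM yM \<open>y \<noteq> be\<close> by auto
          then obtain i where i: "i \<in> {1..n_o}" "y = orc i" "adj E (orc i) be"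
            using edge_adj[of be y] orc_Vc beVc adj_sym by metis
          have "i = m \<or> i = m + 1"
          proof (rule ccontr)
            assume "\<not> (i = m \<or> i = m + 1)"
            then have "i + 2 \<le> m + 1 \<or> m + 2 \<le> i" by arith
            then show False using disjN[of i "m+1" be] disjN[of m i be] i mR m1R beta_m
              unfolding o1_def o2_def by auto
          qed
          then show ?thesis using i unfolding o1_def o2_def by auto
        qed simp
      qed
    qed
  qed
  have hc: "\<not> adj (Gk k) be c"
  proof (cases "c \<in> Lk k")
    case True then show ?thesis using I3[of c be] beL beVc adj_sym by metis
  next
    case False then show ?thesis using I1[of be c] neq beL beM Vc_notM[OF kk(1) cVc] cc_nadj beVc cVc by auto
  qed
  have hf: "\<not> adj (Gk k) c o2"
  proof (cases "c \<in> Lk k")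
    case True then show ?thesis using I3[of c o2] o1L m1R unfolding o2_def m_def by auto
  next
    case False
    have "\<not> adj E (orc (m+1)) c"
    proof (cases "k = 0")
      case True then show ?thesis using ends k unfolding m_def by auto
    next
      case False then show ?thesis using disjN[of a "m+1" c] ca ab m1R unfolding m_def by auto
    qed
    then show ?thesis using I1[of c o2] False neq o1L o1M Vc_notM[OF kk(1) cVc] adj_sym unfolding o2_def by metis
  qed
  have G': "Gk (Suc k) = meas_x (Gk k) o1 be" using Gk_Suc unfolding o1_def be_def m_def .
  have J4: "adj (Gk (Suc k)) (orc (a + Suc k)) c"
    using meas_step[of c o2 o1 be "Gk k"] neq I4 hd hb hc hf ha adj_sym[of "Gk k" o1 be] G'
    unfolding o2_def m_def by auto
  have J5: "\<forall>x. \<not> adj (Gk (Suc k)) x x" using meas_noloop I5 G' by metis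
  have J2: "\<forall>z\<in>Mk (Suc k). \<forall>y. \<not> adj (Gk (Suc k)) z y"
  proof (intro ballI allI)
    fix z y assume "z \<in> Mk (Suc k)"
    then have "z = o1 \<or> z \<in> Mk k" unfolding Mk_Suc o1_def m_def by auto
    then show "\<not> adj (Gk (Suc k)) z y" using meas_iso_a meas_iso I2 G' by metis
  qed
  have loc: "\<And>w z. w \<notin> Lk (Suc k) \<Longrightarrow> w \<notin> Mk (Suc k) \<Longrightarrow> w \<noteq> o2 \<Longrightarrow> z \<noteq> o1 \<Longrightarrow>
      adj (Gk (Suc k)) w z = adj (Gk k) w z"
  proof -
    fix w z assume h: "w \<notin> Lk (Suc k)" "w \<notin> Mk (Suc k)" "w \<noteq> o2" "z \<noteq> o1"
    have wL: "w \<notin> Lk k" "\<not> adj E o1 w" using h unfolding Lk_Suc o1_def m_def by auto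
    have wo: "w \<noteq> o1" using h o1M' by auto
    have "\<not> adj (Gk k) o1 w" using N5 wL by blast
    moreover have "\<not> adj (Gk k) be w" using Nbe wL wo h by blast
    ultimately show "adj (Gk (Suc k)) w z = adj (Gk k) w z"
      using meas_local[of w o1 z "Gk k" be] wo h G' by simp
  qed
  have LL: "Lk k \<subseteq> Lk (Suc k)" "Mk k \<subseteq> Mk (Suc k)" unfolding Lk_Suc Mk_Suc by auto
  have J1: "\<forall>u v. u \<noteq> v \<longrightarrow> u \<notin> Lk (Suc k) \<longrightarrow> v \<notin> Lk (Suc k) \<longrightarrow> u \<notin> Mk (Suc k) \<longrightarrow> v \<notin> Mk (Suc k)
      \<longrightarrow> adj (Gk (Suc k)) u v = adj E u v"
  proof (intro allI impI)
    fix u v assume h: "u \<noteq> v" "u \<notin> Lk (Suc k)" "v \<notin> Lk (Suc k)" "u \<notin> Mk (Suc k)" "v \<notin> Mk (Suc k)"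
    have uo: "u \<noteq> o1" "v \<noteq> o1" using h o1M' by auto
    have base: "adj (Gk k) u v = adj E u v" using I1 h LL by blast
    show "adj (Gk (Suc k)) u v = adj E u v"
    proof (cases "u = o2")
      case False then show ?thesis using loc[of u v] h uo base by simp
    next
      case True then have "v \<noteq> o2" using h by auto
      then show ?thesis using loc[of v u] h uo base adj_sym by metis
    qed
  qed
  have J3: "\<forall>x\<in>Lk (Suc k). \<forall>y. y \<notin> Lk (Suc k) \<longrightarrow> (y \<in> Vc \<or> (\<exists>j. a + Suc k < j \<and> j \<le> n_o \<and> y = orc j))
      \<longrightarrow> \<not> adj (Gk (Suc k)) x y"
  proof (intro ballI allI impI)
    fix x y assume x: "x \<in> Lk (Suc k)" and y: "y \<notin> Lk (Suc k)"
      and yc: "y \<in> Vc \<or> (\<exists>j. a + Suc k < j \<and> j \<le> n_o \<and> y = orc j)"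
    have xVc: "x \<in> Vc" using Lk_Vc[OF kk(2) x] .
    have yM: "y \<notin> Mk (Suc k)" and yo2: "y \<noteq> o2"
    proof -
      show "y \<notin> Mk (Suc k)"
      proof (cases "y \<in> Vc")
        case True then show ?thesis using Vc_notM[OF kk(2)] by auto
      next
        case False then obtain j where j: "a + Suc k < j" "j \<le> n_o" "y = orc j" using yc by auto
        then have "j \<in> {1..n_o}" using ab by auto
        then show ?thesis using orc_M[OF kk(2)] j by auto
      qed
      show "y \<noteq> o2"
      proof (cases "y \<in> Vc")
        case True then show ?thesis using orc_Vc[OF m1R] unfolding o2_def by auto
      next
        case False then obtain j where j: "a + Suc k < j" "j \<le> n_o" "y = orc j" using yc by auto
        then have "j \<in> {1..n_o}" using ab by auto
        then show ?thesis using orc_inj[OF _ m1R] j unfolding o2_def m_def by fastforce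
      qed
    qed
    have xo: "x \<noteq> o1" using xVc orc_Vc[OF mR] unfolding o1_def by auto
    have eq: "adj (Gk (Suc k)) y x = adj (Gk k) y x" using loc[of y x] y yM yo2 xo by simp
    have yL: "y \<notin> Lk k" using y LL by auto
    show "\<not> adj (Gk (Suc k)) x y"
    proof (cases "x \<in> Lk k")
      case True
      have "y \<in> Vc \<or> (\<exists>j. a + k < j \<and> j \<le> n_o \<and> y = orc j)"
      proof (cases "y \<in> Vc")
        case False
        then obtain j where j: "a + Suc k < j" "j \<le> n_o" "y = orc j" using yc by auto
        then show ?thesis by (intro disjI2 exI[of _ j]) auto
      qed simp
      then have "\<not> adj (Gk k) x y" using I3 True yL by blast
      then show ?thesis using eq adj_sym by metis
    next
      case False
      then have xE: "adj E o1 x" using x unfolding Lk_Suc o1_def m_def by auto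
      have xy: "x \<noteq> y" using x y by auto
      have "adj (Gk k) x y = adj E x y" using I1[of x y] xy False yL Vc_notM[OF kk(1) xVc] yM LL by auto
      moreover have "\<not> adj E x y"
      proof (cases "y \<in> Vc")
        case True then show ?thesis using cc_nadj xVc by auto
      next
        case False then obtain j where j: "a + Suc k < j" "j \<le> n_o" "y = orc j" using yc by auto
        then have "j \<in> {1..n_o}" "m + 2 \<le> j" using ab unfolding m_def by auto
        then show ?thesis using disjN[of m j x] xE mR j adj_sym unfolding o1_def by metis
      qed
      ultimately show ?thesis using eq adj_sym by metis
    qed
  qed
  show ?thesis unfolding Inv_def using J1 J2 J3 J4 J5 ha unfolding o1_def be_def m_def by blast
qed

lemma Inv_all: "k \<le> b - a \<Longrightarrow> Inv k"
proof (induction k)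
  case 0 then show ?case using Inv_0 by simp
next
  case (Suc k) then show ?case using Inv_Suc by simp
qed

lemma meas_result: "(\<forall>k < b - a. adj (Gk k) (orc (a+k)) (beta (a+k)))
   \<and> adj (Gk (b-a)) (orc b) c' \<and> adj (meas_x (Gk (b-a)) (orc b) c') c c'"
proof -
  have I: "Inv (b-a)" using Inv_all by simp
  have bR: "b \<in> {1..n_o}" using ab by auto
  have c'L: "c' \<notin> Lk (b-a)"
  proof
    assume "c' \<in> Lk (b-a)"
    then obtain j where j: "a \<le> j" "j < b" "adj E (orc j) c'" unfolding Lk_def using ab by auto
    then have "j \<in> {1..n_o}" using ab by auto
    then show False using c'_only j by fastforce
  qed
  have oL: "orc b \<notin> Lk (b-a)" using orc_notL bR by simp
  have oM: "orc b \<notin> Mk (b-a)" using orc_M[of "b-a" b] bR ab by simp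
  have c'M: "c' \<notin> Mk (b-a)" using Vc_notM cc by simp
  have ne: "orc b \<noteq> c'" "c \<noteq> orc b" using orc_Vc[OF bR] cc by auto
  have A2: "adj (Gk (b-a)) (orc b) c'" using I c'L oL oM c'M ne cb unfolding Inv_def by blast
  have A4: "adj (Gk (b-a)) (orc b) c" and A5: "\<not> adj (Gk (b-a)) c' c'" using I ab unfolding Inv_def by auto
  have A3: "adj (meas_x (Gk (b-a)) (orc b) c') c c'"
    using meas_final[of c c' "orc b" "Gk (b-a)"] cc ne A2 A4 A5 by auto
  show ?thesis using A2 A3 Inv_Suc Inv_all by simp
qed

end



lemma nbhd_adj: "(y \<in> nbhd E x) = adj E x y" by (simp add: nbhd_def adj_def)

context su begin

lemma path_edge: "is_path E x y q \<Longrightarrow> i + 1 < length q \<Longrightarrow> adj E (q!i) (q!(i+1))"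
  unfolding is_path_def adj_def by blast

lemma parity: "is_path E c c' q \<Longrightarrow> i < length q \<Longrightarrow>
  (even i \<longrightarrow> q!i \<in> Vc) \<and> (odd i \<longrightarrow> (\<exists>j\<in>{1..n_o}. q!i = orc j))"
proof (induction i)
  case 0
  then have "q!0 = c" unfolding is_path_def by (metis hd_conv_nth)
  then show ?case using cc by simp
next
  case (Suc i)
  then have IH: "(even i \<longrightarrow> q!i \<in> Vc) \<and> (odd i \<longrightarrow> (\<exists>j\<in>{1..n_o}. q!i = orc j))" by simp
  have e: "adj E (q!i) (q!(Suc i))" using path_edge[of c c' q i] Suc by simp
  obtain j v where jv: "j \<in> {1..n_o}" "v \<in> Vc" "(q!i = orc j \<and> q!(Suc i) = v) \<or> (q!i = v \<and> q!(Suc i) = orc j)"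
    using edge_adj[OF e] by blast
  show ?case
  proof (cases "even i")
    case True
    then have "q!i \<in> Vc" using IH by simp
    then have "q!(Suc i) = orc j" using jv orc_Vc by auto
    then show ?thesis using True jv by auto
  next
    case False
    then obtain j' where "j' \<in> {1..n_o}" "q!i = orc j'" using IH by auto
    then have "q!(Suc i) \<in> Vc" using jv orc_Vc by auto
    then show ?thesis using False by auto
  qed
qed

lemma bound: "a < b \<Longrightarrow> is_path E c c' q \<Longrightarrow> i < length q \<Longrightarrow>
  (even i \<longrightarrow> (\<forall>j\<in>{1..n_o}. adj E (orc j) (q!i) \<longrightarrow> j \<le> a + i div 2)) \<and>
  (odd i \<longrightarrow> (\<exists>j\<in>{1..n_o}. q!i = orc j \<and> j \<le> a + i div 2))"
proof (induction i)
  case 0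
  then have "q!0 = c" unfolding is_path_def by (metis hd_conv_nth)
  then show ?case using c_only 0 by simp
next
  case (Suc i)
  then have IH: "(even i \<longrightarrow> (\<forall>j\<in>{1..n_o}. adj E (orc j) (q!i) \<longrightarrow> j \<le> a + i div 2)) \<and>
    (odd i \<longrightarrow> (\<exists>j\<in>{1..n_o}. q!i = orc j \<and> j \<le> a + i div 2))" by simp
  have e: "adj E (q!i) (q!(Suc i))" using path_edge[of c c' q i] Suc by simp
  have P1: "(even (Suc i) \<longrightarrow> q!(Suc i) \<in> Vc) \<and> (odd (Suc i) \<longrightarrow> (\<exists>j\<in>{1..n_o}. q!(Suc i) = orc j))"
    using parity Suc by blast
  show ?case
  proof (cases "even i")
    case True
    then obtain j where j: "j \<in> {1..n_o}" "q!(Suc i) = orc j" using P1 by auto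
    then have "adj E (orc j) (q!i)" using e adj_sym by metis
    then have "j \<le> a + i div 2" using IH True j by auto
    then show ?thesis using True j by auto
  next
    case False
    then obtain j where j: "j \<in> {1..n_o}" "q!i = orc j" "j \<le> a + i div 2" using IH by auto
    have "\<forall>j'\<in>{1..n_o}. adj E (orc j') (q!(Suc i)) \<longrightarrow> j' \<le> a + Suc i div 2"
    proof (intro ballI impI)
      fix j' assume j': "j' \<in> {1..n_o}" "adj E (orc j') (q!(Suc i))"
      have "j' \<le> j + 1"
      proof (rule ccontr)
        assume "\<not> j' \<le> j + 1"
        then show False using disjN[of j j' "q!(Suc i)"] j j' e by auto
      qed
      then show "j' \<le> a + Suc i div 2" using j False by auto
    qed
    then show ?thesis using False by auto
  qed
qed

lemma len_bound: "is_path E c c' q \<Longrightarrow> 2*(b-a)+3 \<le> length q"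
proof -
  assume P: "is_path E c c' q"
  define n where "n = length q"
  have ne: "q \<noteq> []" and hl: "hd q = c" "last q = c'" using P unfolding is_path_def by auto
  have n1: "n \<noteq> 1"
  proof
    assume "n = 1"
    then obtain x where "q = [x]" using ne unfolding n_def by (cases q) auto
    then show False using hl cc by auto
  qed
  have n0: "n \<ge> 1" using ne unfolding n_def by (cases q) auto
  have lastq: "q!(n-1) = c'" using hl ne unfolding n_def by (simp add: last_conv_nth)
  have ev: "even (n-1)"
  proof (rule ccontr)
    assume "odd (n-1)"
    then obtain j where "j \<in> {1..n_o}" "q!(n-1) = orc j" using parity[OF P, of "n-1"] n0 unfolding n_def by auto
    then show False using lastq orc_Vc cc by metis
  qed
  show ?thesis
  proof (cases "a < b")
    case False
    then have "b - a = 0" by simp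
    then show ?thesis using ev n1 n0 unfolding n_def by presburger
  next
    case True
    have od: "odd (n-2)" and lt: "n-2 < length q" using ev n1 n0 unfolding n_def by (presburger, simp)
    then obtain j where j: "j \<in> {1..n_o}" "q!(n-2) = orc j" "j \<le> a + (n-2) div 2"
      using bound[OF True P lt] by auto
    have "adj E (q!(n-2)) (q!(n-2+1))" using path_edge[OF P, of "n-2"] n1 n0 unfolding n_def by simp
    moreover have "n-2+1 = n-1" using n1 n0 by simp
    ultimately have "adj E (orc j) c'" using j lastq by simp
    then have "b \<le> j" using c'_only j True by simp
    then show ?thesis using j ev n1 n0 unfolding n_def by presburger
  qed
qed

end



context su begin

definition g where "g i = (if i = 0 then c else if i = 2*(b-a)+2 then c'
   else if odd i then orc (a + i div 2) else beta (a + i div 2 - 1))"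

definition p0 where "p0 = map g [0..<2*(b-a)+3]"

lemma g_odd: "odd i \<Longrightarrow> i < 2*(b-a)+3 \<Longrightarrow> g i = orc (a + i div 2) \<and> a + i div 2 \<in> {1..n_o} \<and> a + i div 2 \<le> b"
  unfolding g_def using ab by auto

lemma g_even: "even i \<Longrightarrow> 0 < i \<Longrightarrow> i < 2*(b-a)+2 \<Longrightarrow> g i = beta (a + i div 2 - 1) \<and> a \<le> a + i div 2 - 1 \<and> a + i div 2 - 1 < b"
  unfolding g_def using ab by auto

lemma g_inj: "inj_on g {0..<2*(b-a)+3}"
proof (rule inj_onI)
  fix i j assume i: "i \<in> {0..<2*(b-a)+3}" and j: "j \<in> {0..<2*(b-a)+3}" and e: "g i = g j"
  have cls: "\<And>k. k < 2*(b-a)+3 \<Longrightarrow> k = 0 \<or> k = 2*(b-a)+2 \<or> odd k \<or> (even k \<and> 0 < k \<and> k < 2*(b-a)+2)"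
    by presburger
  have g0: "g 0 = c" and gl: "g (2*(b-a)+2) = c'" unfolding g_def by auto
  have notorc: "\<And>k. even k \<Longrightarrow> 0 < k \<Longrightarrow> k < 2*(b-a)+2 \<Longrightarrow> g k \<in> Vc \<and> g k \<noteq> c \<and> g k \<noteq> c'"
  proof -
    fix k assume k: "even k" "0 < k" "k < 2*(b-a)+2"
    from g_even[OF k] show "g k \<in> Vc \<and> g k \<noteq> c \<and> g k \<noteq> c'"
      using beta_Vc c_ne_beta c'_ne_beta by auto
  qed
  have oddnV: "\<And>k. odd k \<Longrightarrow> k < 2*(b-a)+3 \<Longrightarrow> g k \<notin> Vc"
  proof -
    fix k assume k: "odd k" "k < 2*(b-a)+3"
    from g_odd[OF k] show "g k \<notin> Vc" using orc_Vc by auto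
  qed
  have ci: "i = 0 \<or> i = 2*(b-a)+2 \<or> odd i \<or> (even i \<and> 0 < i \<and> i < 2*(b-a)+2)" using cls i by simp
  have cj: "j = 0 \<or> j = 2*(b-a)+2 \<or> odd j \<or> (even j \<and> 0 < j \<and> j < 2*(b-a)+2)" using cls j by simp
  have vc: "\<And>k. k < 2*(b-a)+3 \<Longrightarrow> even k \<Longrightarrow> g k \<in> Vc"
  proof -
    fix k assume "k < 2*(b-a)+3" "even k"
    then have "k = 0 \<or> k = 2*(b-a)+2 \<or> (0 < k \<and> k < 2*(b-a)+2)" by presburger
    then show "g k \<in> Vc" using notorc[of k] g0 gl cc \<open>even k\<close> by auto
  qed
  show "i = j"
  proof (cases "odd i \<or> odd j")
    case True
    have i': "i < 2*(b-a)+3" and j': "j < 2*(b-a)+3" using i j by auto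
    have "odd i"
    proof (rule ccontr)
      assume "\<not> odd i"
      then have "g j \<in> Vc" using vc[OF i'] e by auto
      moreover have "odd j" using True \<open>\<not> odd i\<close> by auto
      ultimately show False using oddnV[OF _ j'] by auto
    qed
    moreover have "odd j"
    proof (rule ccontr)
      assume "\<not> odd j"
      then have "g i \<in> Vc" using vc[OF j'] e by auto
      then show False using oddnV[OF \<open>odd i\<close> i'] by auto
    qed
    ultimately have "odd i" "odd j" by auto
    then have "orc (a + i div 2) = orc (a + j div 2)" "a + i div 2 \<in> {1..n_o}" "a + j div 2 \<in> {1..n_o}"
      using g_odd[OF \<open>odd i\<close> i'] g_odd[OF \<open>odd j\<close> j'] e by auto
    then have "a + i div 2 = a + j div 2" using orc_inj[of "a + i div 2" "a + j div 2"] by blast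
    then have "i div 2 = j div 2" by simp
    then show ?thesis using \<open>odd i\<close> \<open>odd j\<close> by presburger
  next
    case False
    then have ci': "i = 0 \<or> i = 2*(b-a)+2 \<or> (0 < i \<and> i < 2*(b-a)+2)"
      and cj': "j = 0 \<or> j = 2*(b-a)+2 \<or> (0 < j \<and> j < 2*(b-a)+2)" using ci cj by auto
    show ?thesis
    proof (cases "0 < i \<and> i < 2*(b-a)+2 \<and> 0 < j \<and> j < 2*(b-a)+2")
      case True
      have evv: "even i" "even j" using False by auto
      have gi: "g i = beta (a + i div 2 - 1) \<and> a \<le> a + i div 2 - 1 \<and> a + i div 2 - 1 < b"
        using g_even[OF evv(1)] True by blast
      have gj: "g j = beta (a + j div 2 - 1) \<and> a \<le> a + j div 2 - 1 \<and> a + j div 2 - 1 < b"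
        using g_even[OF evv(2)] True by blast
      have "beta (a + i div 2 - 1) = beta (a + j div 2 - 1)" "a \<le> a + i div 2 - 1" "a + i div 2 - 1 < b"
        "a \<le> a + j div 2 - 1" "a + j div 2 - 1 < b" using gi gj e by auto
      then have "a + i div 2 - 1 = a + j div 2 - 1" using beta_inj by blast
      moreover have "1 \<le> i div 2" "1 \<le> j div 2" using True evv by presburger+
      ultimately have "i div 2 = j div 2" by linarith
      then show ?thesis using evv by presburger
    next
      case False
      have ec: "\<And>k. (k = 0 \<or> k = 2*(b-a)+2 \<or> (0 < k \<and> k < 2*(b-a)+2)) \<Longrightarrow> even k \<Longrightarrow>
         (g k = c \<longleftrightarrow> k = 0) \<and> (g k = c' \<longleftrightarrow> k = 2*(b-a)+2)"
      proof -
        fix k assume k: "k = 0 \<or> k = 2*(b-a)+2 \<or> (0 < k \<and> k < 2*(b-a)+2)" "even k"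
        then show "(g k = c \<longleftrightarrow> k = 0) \<and> (g k = c' \<longleftrightarrow> k = 2*(b-a)+2)"
          using notorc[of k] g0 gl cc by auto
      qed
      have ei: "even i" "even j" using \<open>\<not> (odd i \<or> odd j)\<close> by auto
      have "i = 0 \<or> i = 2*(b-a)+2 \<or> j = 0 \<or> j = 2*(b-a)+2" using False ci' cj' by auto
      then show ?thesis using ec[OF ci' ei(1)] ec[OF cj' ei(2)] e by auto
    qed
  qed
qed


lemma g_edge: "i + 1 < 2*(b-a)+3 \<Longrightarrow> adj E (g i) (g (i+1))"
proof -
  assume i: "i + 1 < 2*(b-a)+3"
  have "i = 0 \<or> i = 2*(b-a)+1 \<or> (odd i \<and> i < 2*(b-a)+1) \<or> (even i \<and> 0 < i \<and> i < 2*(b-a)+1)"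
    using i by presburger
  moreover
  { assume "i = 0"
    then have "g i = c" "g (i+1) = orc a" unfolding g_def by auto
    then have ?thesis using ca adj_sym by metis }
  moreover
  { assume h: "i = 2*(b-a)+1"
    then have "g (i+1) = c'" unfolding g_def by auto
    moreover have "g i = orc b" using g_odd[of i] h ab by auto
    ultimately have ?thesis using cb by simp }
  moreover
  { assume h: "odd i \<and> i < 2*(b-a)+1"
    then have "g i = orc (a + i div 2)" using g_odd by auto
    moreover have "g (i+1) = beta (a + (i+1) div 2 - 1)" using g_even[of "i+1"] h by auto
    moreover have "(i+1) div 2 = i div 2 + 1" "a + i div 2 < b" using h by presburger+
    ultimately have ?thesis using beta[of "a + i div 2"] by auto }
  moreover
  { assume h: "even i \<and> 0 < i \<and> i < 2*(b-a)+1"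
    then have "g i = beta (a + i div 2 - 1)" "a \<le> a + i div 2 - 1" "a + i div 2 - 1 < b" using g_even by auto
    moreover have "g (i+1) = orc (a + (i+1) div 2)" using g_odd[of "i+1"] h by auto
    moreover have "(i+1) div 2 = i div 2" "a + i div 2 - 1 + 1 = a + i div 2" using h by presburger+
    ultimately have ?thesis using beta[of "a + i div 2 - 1"] adj_sym by metis }
  ultimately show ?thesis by blast
qed

lemma p0_path: "is_path E c c' p0"
proof -
  have "p0 \<noteq> []" unfolding p0_def by simp
  moreover have "hd p0 = c" unfolding p0_def g_def by (simp add: hd_map upt_rec)
  moreover have "last p0 = c'" unfolding p0_def g_def by (simp add: last_map)
  moreover have "distinct p0" unfolding p0_def using g_inj by (simp add: distinct_map)
  moreover have "\<forall>i. i + 1 < length p0 \<longrightarrow> {p0 ! i, p0 ! (i + 1)} \<in> E"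
    using g_edge unfolding p0_def adj_def by (simp del: upt_Suc)
  ultimately show ?thesis unfolding is_path_def by blast
qed

lemma p0_len: "length p0 = 2*(b-a)+3" unfolding p0_def by simp

lemma prox: "proximity_is E n_o orc Vc c c' (b - a + 1)"
proof -
  have sp: "is_shortest_path E c c' p0" unfolding is_shortest_path_def
    using p0_path len_bound p0_len by simp
  have "\<forall>p. is_shortest_path E c c' p \<longrightarrow> path_proximity E n_o orc Vc p = b - a + 1"
  proof (intro allI impI)
    fix p assume "is_shortest_path E c c' p"
    then have P: "is_path E c c' p" and le: "length p \<le> length p0" unfolding is_shortest_path_def
      using p0_path by auto
    have lp: "length p = 2*(b-a)+3" using le len_bound[OF P] p0_len by simp
    have dp: "distinct p" using P unfolding is_path_def by simp
    define S where "S = {i. 0 < i \<and> i + 1 < length p \<and> is_bridge E n_o orc Vc (p ! i)}"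
    have "S = (\<lambda>t. 2*t) ` {1..b-a}"
    proof
      show "S \<subseteq> (\<lambda>t. 2*t) ` {1..b-a}"
      proof
        fix i assume "i \<in> S"
        then have i: "0 < i" "i + 1 < length p" "p!i \<in> Vc" unfolding S_def is_bridge_def by auto
        have "even i"
        proof (rule ccontr)
          assume "\<not> even i"
          then obtain j where "j \<in> {1..n_o}" "p!i = orc j" using parity[OF P, of i] i by auto
          then show False using orc_Vc i by metis
        qed
        then obtain t where "i = 2*t" by blast
        then show "i \<in> (\<lambda>t. 2*t) ` {1..b-a}" using i lp by auto
      qed
      show "(\<lambda>t. 2*t) ` {1..b-a} \<subseteq> S"
      proof
        fix i assume "i \<in> (\<lambda>t. 2*t) ` {1..b-a}"
        then obtain t where t: "i = 2*t" "1 \<le> t" "t \<le> b - a" by auto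
        have i: "0 < i" "i + 1 < length p" "even i" using t lp by auto
        have iV: "p!i \<in> Vc" using parity[OF P, of i] i by auto
        have oi: "odd (i-1)" "i - 1 < length p" using i by presburger+
        obtain j1 where j1: "j1 \<in> {1..n_o}" "p!(i-1) = orc j1" using parity[OF P, of "i-1"] oi by auto
        obtain j2 where j2: "j2 \<in> {1..n_o}" "p!(i+1) = orc j2" using parity[OF P, of "i+1"] i by auto
        have e1: "adj E (orc j1) (p!i)" using path_edge[OF P, of "i-1"] i j1 by simp
        have e2: "adj E (orc j2) (p!i)" using path_edge[OF P, of i] i j2 adj_sym by metis
        have "p!(i-1) \<noteq> p!(i+1)" using dp i by (simp add: nth_eq_iff_index_eq)
        then have "j1 \<noteq> j2" using j1 j2 by auto
        have "{j1, j2} \<subseteq> {j \<in> {1..n_o}. p!i \<in> nbhd E (orc j)}"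
          using j1 j2 e1 e2 by (auto simp: nbhd_adj)
        then have "card {j1,j2} \<le> card {j \<in> {1..n_o}. p!i \<in> nbhd E (orc j)}"
          by (rule card_mono[rotated]) simp
        then have "is_bridge E n_o orc Vc (p!i)" unfolding is_bridge_def using \<open>j1 \<noteq> j2\<close> iV by simp
        then show "i \<in> S" unfolding S_def using i by simp
      qed
    qed
    moreover have "card ((\<lambda>t. 2*t) ` {1..b-a}) = b - a"
      by (subst card_image) (auto simp: inj_on_def)
    ultimately show "path_proximity E n_o orc Vc p = b - a + 1"
      unfolding path_proximity_def S_def by simp
  qed
  then show ?thesis unfolding proximity_is_def using sp by blast
qed

end
theorem lemma5:
  fixes V :: "'a set" and E :: "'a set set" and orc :: "nat \<Rightarrow> 'a" and Vc :: "'a set"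
    and n_o k_c kb a b :: nat and c c' :: 'a and beta :: "nat \<Rightarrow> 'a"
  assumes T: "tree_like V E n_o k_c kb orc Vc"
    and ab: "1 \<le> a" "a \<le> b" "b \<le> n_o"
    and cc: "c \<in> Vc" "c' \<in> Vc" "c \<noteq> c'"
    and ca: "c \<in> nbhd E (orc a)" and cb: "c' \<in> nbhd E (orc b)"
    and ends: "a < b \<Longrightarrow> c \<notin> nbhd E (orc (a + 1)) \<and> c' \<notin> nbhd E (orc (b - 1))"
    and beta: "\<forall>m. a \<le> m \<and> m < b \<longrightarrow> beta m \<in> nbhd E (orc m) \<inter> nbhd E (orc (m + 1))"
  shows "proximity_is E n_o orc Vc c c' (b - a + 1)
       \<and> (\<forall>k < b - a. beta (a + k) \<in> nbhd (meas_seq E orc beta a k) (orc (a + k)))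
       \<and> c' \<in> nbhd (meas_seq E orc beta a (b - a)) (orc b)
       \<and> {c, c'} \<in> meas_x (meas_seq E orc beta a (b - a)) (orc b) c'"
proof -
  interpret su V E n_o k_c kb orc Vc a b c c' beta
  proof unfold_locales
    show "tree_like V E n_o k_c kb orc Vc" by (rule T)
    show "1 \<le> a" "a \<le> b" "b \<le> n_o" by (rule ab)+
    show "c \<in> Vc" "c' \<in> Vc" "c \<noteq> c'" by (rule cc)+
    show "adj E (orc a) c" using ca by (simp add: nbhd_adj)
    show "adj E (orc b) c'" using cb by (simp add: nbhd_adj)
    show "a < b \<Longrightarrow> \<not> adj E (orc (a+1)) c \<and> \<not> adj E (orc (b-1)) c'" using ends by (simp add: nbhd_adj)
    show "\<And>m. a \<le> m \<Longrightarrow> m < b \<Longrightarrow> adj E (orc m) (beta m) \<and> adj E (orc (m+1)) (beta m)"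
      using beta by (simp add: nbhd_adj)
  qed
  have M: "(\<forall>k < b - a. adj (Gk k) (orc (a+k)) (beta (a+k)))
   \<and> adj (Gk (b-a)) (orc b) c' \<and> adj (meas_x (Gk (b-a)) (orc b) c') c c'" by (rule meas_result)
  show ?thesis using prox M unfolding Gk_def nbhd_adj by (simp add: adj_def)
qed

end
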